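(* Let $\kappa>0$. For any $z\in\mathbb C$ with $0<\operatorname{Im}z\le1$ and $|\operatorname{Re}z|\le 2-\kappa$, there exist $E$ with $|E|\le2-\kappa$ and $0\le t<1$ such that $z=t^{-1/2}z^{(E)}_t$. Moreover there is $c_\kappa>0$ (depending only on $\kappa$) such that $c_\kappa\le t$ and $c_\kappa\operatorname{Im}z\le\operatorname{Im}z^{(E)}_t\le c_\kappa^{-1}\operatorname{Im}z$. For such $z,E,t$ one has $m_{sc}(z)=t^{1/2}m^{(E)}$, and $G(z)=(H-z)^{-1}$ has the same distribution as $t^{1/2}G_t^{(E)}$ where $G^{(E)}_t=(H_t-z^{(E)}_t)^{-1}$.
   Context: $m_{sc}(z)$ is the Stieltjes transform of the semicircle density $\frac1{2\pi}\sqrt{(4-x^2)_+}$. For $|E|<2$, $m^{(E)}:=\lim_{\varepsilon\downarrow0}m_{sc}(E+i\varepsilon)$, and $z^{(E)}_t:=E+(1-t)m^{(E)}$ for $0\le t\le1$. $H$ is the $N\times N$ Hermitian band matrix with independent centered Gaussian entries $\{H_{ij}\}_{i\le j}$, $\mathbb E|H_{ij}|^2=S_{ij}$ (where $N=WL$, blocks $\mathcal I_a=\{(a-1)W+1,\dots,aW\}$, $S_{ij}=W^{-1}S^{(B)}_{[i][j]}$, $S^{(B)}_{ab}=\frac13\mathbf 1(a-b\in\{-1,0,1\}\bmod L)$, $[i]$ the block of $i$). $H_t$ is the Hermitian matrix Brownian motion with $H_0=0$, $dH_{t,ij}=\sqrt{S_{ij}}\,dB_{t,ij}$, where $B_{t,ij}$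 ($i\le j$) are independent standard complex Brownian motions and $B_{ji}=\overline{B_{ij}}$; in particular $H_t$ has the law of $\sqrt t\,H$. *)

theory Defs
  imports "HOL-Probability.Probability"
begin

definition sc_density :: "real \<Rightarrow> real" where
  "sc_density x = sqrt (max 0 (4 - x\<^sup>2)) / (2 * pi)"

definition m_sc :: "complex \<Rightarrow> complex" where
  "m_sc z = integral\<^sup>L lborel (\<lambda>x. complex_of_real (sc_density x) / (complex_of_real x - z))"

definition m_bd :: "real \<Rightarrow> complex" where
  "m_bd E = Lim (at_right 0) (\<lambda>\<epsilon>::real. m_sc (complex_of_real E + \<i> * complex_of_real \<epsilon>))"

definition z_flow :: "real \<Rightarrow> real \<Rightarrow> complex" where
  "z_flow E t = complex_of_real E + complex_of_real (1 - t) * m_bd E"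

definition SB :: "nat \<Rightarrow> nat \<Rightarrow> nat \<Rightarrow> real" where
  "SB L a b = (if (int a - int b) mod int L \<in> {(-1) mod int L, 0, 1 mod int L} then 1/3 else 0)"

definition S_band :: "nat \<Rightarrow> nat \<Rightarrow> nat \<Rightarrow> nat \<Rightarrow> real" where
  "S_band W L i j = SB L (i div W) (j div W) / real W"

text \<open>With s = 1 this is the law of H; with s = t it is the law of the matrix Brownian
  motion H_t at time t (started at 0).\<close>
definition gauss_mat ::
  "nat \<Rightarrow> nat \<Rightarrow> real \<Rightarrow> (nat \<Rightarrow> nat \<Rightarrow> real) \<Rightarrow> (nat \<Rightarrow> nat \<Rightarrow> real) \<Rightarrow> nat \<Rightarrow> nat \<Rightarrow> complex" where
  "gauss_mat W L s xi eta i j =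
     (if i < j then complex_of_real (sqrt (s * S_band W L i j)) *
                      (complex_of_real (xi i j) + \<i> * complex_of_real (eta i j)) / complex_of_real (sqrt 2)
      else if i = j then complex_of_real (sqrt (s * S_band W L i i) * xi i i)
      else cnj (complex_of_real (sqrt (s * S_band W L j i)) *
                      (complex_of_real (xi j i) + \<i> * complex_of_real (eta j i)) / complex_of_real (sqrt 2)))"

definition upper_idx :: "nat \<Rightarrow> (nat \<times> nat) set" where
  "upper_idx N = {(i, j). i \<le> j \<and> j < N}"

definition std_gauss_family ::
  "'w measure \<Rightarrow> nat \<Rightarrow> ('w \<Rightarrow> nat \<Rightarrow> nat \<Rightarrow> real) \<Rightarrow> ('w \<Rightarrow> nat \<Rightarrow> nat \<Rightarrow> real) \<Rightarrow> bool" where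
  "std_gauss_family M N xi eta \<longleftrightarrow>
     prob_space M \<and>
     prob_space.indep_vars M (\<lambda>_. borel)
        (\<lambda>k. case k of Inl (i, j) \<Rightarrow> (\<lambda>\<omega>. xi \<omega> i j) | Inr (i, j) \<Rightarrow> (\<lambda>\<omega>. eta \<omega> i j))
        (Inl ` upper_idx N \<union> Inr ` upper_idx N) \<and>
     (\<forall>(i, j) \<in> upper_idx N.
        distributed M lborel (\<lambda>\<omega>. xi \<omega> i j) std_normal_density \<and>
        distributed M lborel (\<lambda>\<omega>. eta \<omega> i j) std_normal_density)"

definition mat_inv :: "nat \<Rightarrow> (nat \<Rightarrow> nat \<Rightarrow> complex) \<Rightarrow> nat \<Rightarrow> nat \<Rightarrow> complex" where
  "mat_inv N A = (THE B. (\<forall>i<N. \<forall>j<N. (\<Sum>k<N. A i k * B k j) = (if i = j then 1 else 0)) \<and>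
                         (\<forall>i j. \<not> (i < N \<and> j < N) \<longrightarrow> B i j = 0))"

definition resolvent :: "nat \<Rightarrow> (nat \<Rightarrow> nat \<Rightarrow> complex) \<Rightarrow> complex \<Rightarrow> nat \<Rightarrow> nat \<Rightarrow> complex" where
  "resolvent N A z = mat_inv N (\<lambda>i j. A i j - (if i = j then z else 0))"

definition mat_law :: "'w measure \<Rightarrow> nat \<Rightarrow> ('w \<Rightarrow> nat \<Rightarrow> nat \<Rightarrow> complex) \<Rightarrow> (nat \<times> nat \<Rightarrow> complex) measure" where
  "mat_law M N X = distr M (PiM ({..<N} \<times> {..<N}) (\<lambda>_. borel))
                      (\<lambda>\<omega>. \<lambda>(i, j) \<in> {..<N} \<times> {..<N}. X \<omega> i j)"

end

theory Submission
  imports Defs "Jordan_Normal_Form.Determinant"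
begin

lemma alg:
  fixes a S X :: complex
  assumes S2: "S*S = 4 - X*X" and S0: "S \<noteq> 0" and a0: "a \<noteq> 0"
   and p1: "1 - a*((X - \<i>*S)/2) \<noteq> 0" and p2: "1 - a*((X + \<i>*S)/2) \<noteq> 0"
   and xz: "X - (a + 1/a) \<noteq> 0"
  shows "- X/S + 2*a*(-1/S) - \<i>*(a - 1/a) * ((-a*((1 - \<i>*(-X/S))/2)) * inverse (1 - a*((X - \<i>*S)/2))
             - (-a*((1 + \<i>*(-X/S))/2)) * inverse (1 - a*((X + \<i>*S)/2))) = S / (X - (a + 1/a))"
proof -
  define u where "u = (X + \<i>*S)/2"
  define ub where "ub = (X - \<i>*S)/2"
  define P1 where "P1 = 1 - a*ub"
  define P2 where "P2 = 1 - a*u"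
  have uub: "u*ub = 1" unfolding u_def ub_def
    by (simp add: field_simps) (metis (no_types, lifting) S2 add.commute diff_add_cancel mult.commute power2_eq_square power2_i mult.assoc mult_minus_left)
  have d1: "(1 - \<i>*(-X/S))/2 = \<i>*ub/S" unfolding ub_def using S0 by (simp add: field_simps)
  have d2: "(1 + \<i>*(-X/S))/2 = -\<i>*u/S" unfolding u_def using S0 by (simp add: field_simps)
  have upl: "u + ub = X" unfolding u_def ub_def by (simp add: field_simps)
  have "P1*P2 = 1 - a*(u+ub) + a*a*(u*ub)" unfolding P1_def P2_def by (simp add: algebra_simps)
  also have "\<dots> = -a*(X - (a + 1/a))" unfolding upl uub using a0 by (simp add: field_simps)
  finally have P12: "P1*P2 = -a*(X - (a + 1/a))" .
  have P1: "P1 \<noteq> 0" "P2 \<noteq> 0" using p1 p2 by (auto simp: P1_def P2_def u_def ub_def)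
  have sumq: "ub/P1 + u/P2 = (X - 2*a)/(P1*P2)"
  proof -
    have "ub/P1 + u/P2 = (ub*P2 + u*P1)/(P1*P2)" using P1 by (simp add: field_simps)
    also have "ub*P2 + u*P1 = (u+ub) - 2*a*(u*ub)" unfolding P1_def P2_def by (simp add: algebra_simps)
    also have "\<dots> = X - 2*a" unfolding upl uub by simp
    finally show ?thesis .
  qed
  have gen: "-(a*\<i>/S)*(Y/(-a*D)) = \<i>*Y/(S*D)" if "D \<noteq> 0" for Y D
    using a0 S0 that by (simp add: field_simps)
  have gen2: "- X/S + 2*a*(-1/S) - \<i>*(a - 1/a) * (\<i>*Y/(S*D)) = (-(X + 2*a)*D + (a - 1/a)*Y)/(S*D)"
    if "S \<noteq> 0" "D \<noteq> 0" for Y D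
    using a0 that by (simp add: field_simps)
  have B: "(-a*(\<i>*ub/S)) * inverse P1 - (-a*(-\<i>*u/S)) * inverse P2 = -(a*\<i>/S)*(ub/P1 + u/P2)"
    using P1 S0 by (simp add: field_simps)
  also have "\<dots> = \<i>*(X - 2*a)/(S*(X - (a + 1/a)))" unfolding sumq P12 using a0 S0 xz
    by (simp add: gen)
  finally have B': "(-a*(\<i>*ub/S)) * inverse P1 - (-a*(-\<i>*u/S)) * inverse P2 = \<i>*(X - 2*a)/(S*(X - (a + 1/a)))" .
  have "- X/S + 2*a*(-1/S) - \<i>*(a - 1/a) * (\<i>*(X - 2*a)/(S*(X - (a + 1/a)))) = S / (X - (a + 1/a))"
  proof -
    have e: "-(X + 2*a)*(X - (a + 1/a)) + (a - 1/a)*(X - 2*a) = S*S" unfolding S2 using a0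
      by (simp add: field_simps)
    have "- X/S + 2*a*(-1/S) - \<i>*(a - 1/a) * (\<i>*(X - 2*a)/(S*(X - (a + 1/a))))
       = (-(X + 2*a)*(X - (a + 1/a)) + (a - 1/a)*(X - 2*a))/(S*(X - (a + 1/a)))"
      using S0 xz by (rule gen2)
    also have "\<dots> = S / (X - (a + 1/a))" unfolding e using S0 by simp
    finally show ?thesis .
  qed
  moreover have e1: "1 - a*((X - \<i>*S)/2) = P1" unfolding P1_def ub_def ..
  moreover have e2: "1 - a*((X + \<i>*S)/2) = P2" unfolding P2_def u_def ..
  ultimately show ?thesis unfolding e1 e2 d1 d2 B' by simp
qed


definition Fa :: "complex \<Rightarrow> real \<Rightarrow> complex" where
  "Fa a x = of_real (sqrt (4 - x\<^sup>2)) + 2*a* of_real (arccos (x/2))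
     - \<i>*(a - 1/a)*(Ln (1 - a*((of_real x - \<i>* of_real (sqrt (4 - x\<^sup>2)))/2))
                     - Ln (1 - a*((of_real x + \<i>* of_real (sqrt (4 - x\<^sup>2)))/2)))"

lemma sq_le4: "-2 \<le> x \<Longrightarrow> x \<le> (2::real) \<Longrightarrow> x\<^sup>2 \<le> 4"
proof -
  assume "-2 \<le> x" "x \<le> 2"
  then have "(2-x)*(2+x) \<ge> 0" by (intro mult_nonneg_nonneg) auto
  then show ?thesis by (simp add: power2_eq_square algebra_simps)
qed

lemma sq_less4: "-2 < x \<Longrightarrow> x < (2::real) \<Longrightarrow> x\<^sup>2 < 4"
proof -
  assume "-2 < x" "x < 2"
  then have "(2-x)*(2+x) > 0" by (intro mult_pos_pos) auto
  then show ?thesis by (simp add: power2_eq_square algebra_simps)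
qed

lemma cmod_u:
  fixes x :: real assumes "-2 \<le> x" "x \<le> 2"
  shows "cmod ((of_real x + \<i>* of_real (sqrt (4 - x\<^sup>2)))/2) = 1"
    "cmod ((of_real x - \<i>* of_real (sqrt (4 - x\<^sup>2)))/2) = 1"
proof -
  have h: "x\<^sup>2 \<le> 4" using sq_le4 assms by blast
  have "cmod (of_real x + \<i>* of_real (sqrt (4 - x\<^sup>2))) = sqrt (x\<^sup>2 + (sqrt (4 - x\<^sup>2))\<^sup>2)"
    by (simp add: cmod_def)
  also have "\<dots> = 2" using h by simp
  finally show "cmod ((of_real x + \<i>* of_real (sqrt (4 - x\<^sup>2)))/2) = 1" by (simp add: norm_divide)
  have "cmod (of_real x - \<i>* of_real (sqrt (4 - x\<^sup>2))) = sqrt (x\<^sup>2 + (sqrt (4 - x\<^sup>2))\<^sup>2)"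
    by (simp add: cmod_def)
  also have "\<dots> = 2" using h by simp
  finally show "cmod ((of_real x - \<i>* of_real (sqrt (4 - x\<^sup>2)))/2) = 1" by (simp add: norm_divide)
qed

lemma notnonpos:
  fixes a v :: complex assumes "cmod a < 1" "cmod v \<le> 1"
  shows "1 - a * v \<notin> \<real>\<^sub>\<le>\<^sub>0"
proof -
  have "Re (a * v) \<le> cmod (a * v)" by (rule complex_Re_le_cmod)
  also have "\<dots> = cmod a * cmod v" by (simp add: norm_mult)
  also have "\<dots> < 1" using assms
    by (metis dual_order.strict_trans2 mult_left_le mult_nonneg_nonneg norm_ge_zero less_eq_real_def)
  finally show ?thesis by (simp add: complex_nonpos_Reals_iff)
qed

lemma Fa_deriv:
  fixes a :: complex and x :: real
  assumes a: "cmod a < 1" "a \<noteq> 0" and x: "-2 < x" "x < 2" and z: "Im (a + 1/a) \<noteq> 0"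
  shows "(Fa a has_vector_derivative (of_real (sqrt (4 - x\<^sup>2)) / (of_real x - (a + 1/a)))) (at x)"
proof -
  define s where "s = sqrt (4 - x\<^sup>2)"
  have x2: "x\<^sup>2 < 4" using x sq_less4 by blast
  have s0: "s > 0" unfolding s_def using x2 by simp
  have d4: "((\<lambda>x. 4 - x\<^sup>2) has_real_derivative (-(2*x))) (at x)"
    by (auto intro!: derivative_eq_intros)
  have hs0: "((\<lambda>x. sqrt (4 - x\<^sup>2)) has_real_derivative (inverse (sqrt (4 - x\<^sup>2)) / 2 * (-(2*x)))) (at x)"
    by (rule DERIV_chain2[where f=sqrt and g="\<lambda>x. 4 - x\<^sup>2", OF DERIV_real_sqrt d4]) (use x2 in simp)
  have hs: "((\<lambda>x. sqrt (4 - x\<^sup>2)) has_real_derivative (-x/s)) (at x)"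
    using hs0 unfolding s_def[symmetric] using s0 by (simp add: field_simps)
  have dh: "((\<lambda>x. x/2) has_real_derivative (1/2)) (at x)"
    by (auto intro!: derivative_eq_intros)
  have ha0: "((\<lambda>x. arccos (x/2)) has_real_derivative (inverse (- sqrt (1 - (x/2)\<^sup>2)) * (1/2))) (at x)"
    by (rule DERIV_chain2[where f=arccos and g="\<lambda>x. x/2", OF DERIV_arccos dh]) (use x in auto)
  have "sqrt (1 - (x/2)\<^sup>2) = s/2" unfolding s_def
  proof -
    have e: "1 - (x/2)\<^sup>2 = (4 - x\<^sup>2)/4" by (simp add: field_simps power2_eq_square)
    have s4: "sqrt (4::real) = 2" by (rule real_sqrt_unique) auto
    have "sqrt (1 - (x/2)\<^sup>2) = sqrt ((4 - x\<^sup>2)/4)" by (simp only: e)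
    also have "\<dots> = sqrt (4 - x\<^sup>2)/sqrt 4" by (rule real_sqrt_divide)
    finally show "sqrt (1 - (x/2)\<^sup>2) = sqrt (4 - x\<^sup>2)/2" unfolding s4 .
  qed
  then have ha: "((\<lambda>x. arccos (x/2)) has_real_derivative (-1/s)) (at x)"
    using ha0 s0 by (simp add: field_simps)
  note vS = has_vector_derivative_of_real[OF hs]
  note vA = has_vector_derivative_of_real[OF ha]
  have vX: "((\<lambda>x. complex_of_real x) has_vector_derivative 1) (at x)"
    by (rule has_vector_derivative_eq_rhs[OF has_vector_derivative_of_real[OF DERIV_ident]]) simp
  define X where "X = complex_of_real x"
  define S where "S = complex_of_real s"
  have vU1: "((\<lambda>x. 1 - a*((of_real x - \<i>* of_real (sqrt (4 - x\<^sup>2)))/2)) has_vector_derivative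
      (-a*((1 - \<i>*(-X/S))/2))) (at x)"
    by (rule has_vector_derivative_eq_rhs[OF has_vector_derivative_diff[OF has_vector_derivative_const
       has_vector_derivative_mult_right[OF has_vector_derivative_divide[OF has_vector_derivative_diff[OF vX
       has_vector_derivative_mult_right[OF vS]]]]]]) (simp add: X_def S_def)
  have vU2: "((\<lambda>x. 1 - a*((of_real x + \<i>* of_real (sqrt (4 - x\<^sup>2)))/2)) has_vector_derivative
      (-a*((1 + \<i>*(-X/S))/2))) (at x)"
    by (rule has_vector_derivative_eq_rhs[OF has_vector_derivative_diff[OF has_vector_derivative_const
       has_vector_derivative_mult_right[OF has_vector_derivative_divide[OF has_vector_derivative_add[OF vX
       has_vector_derivative_mult_right[OF vS]]]]]]) (simp add: X_def S_def)
  have cu: "cmod ((X + \<i>*S)/2) = 1" "cmod ((X - \<i>*S)/2) = 1"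
    using cmod_u[of x] x unfolding X_def S_def s_def by auto
  have nn1: "1 - a*((X - \<i>*S)/2) \<notin> \<real>\<^sub>\<le>\<^sub>0" by (rule notnonpos[OF a(1)]) (use cu(2) in simp)
  have nn2: "1 - a*((X + \<i>*S)/2) \<notin> \<real>\<^sub>\<le>\<^sub>0" by (rule notnonpos[OF a(1)]) (use cu(1) in simp)
  have vL1: "((\<lambda>x. Ln (1 - a*((of_real x - \<i>* of_real (sqrt (4 - x\<^sup>2)))/2))) has_vector_derivative
      (-a*((1 - \<i>*(-X/S))/2)) * inverse (1 - a*((X - \<i>*S)/2))) (at x)"
    using field_vector_diff_chain_at[OF vU1 has_field_derivative_Ln] nn1
    unfolding X_def S_def s_def by (simp add: o_def)
  have vL2: "((\<lambda>x. Ln (1 - a*((of_real x + \<i>* of_real (sqrt (4 - x\<^sup>2)))/2))) has_vector_derivative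
      (-a*((1 + \<i>*(-X/S))/2)) * inverse (1 - a*((X + \<i>*S)/2))) (at x)"
    using field_vector_diff_chain_at[OF vU2 has_field_derivative_Ln] nn2
    unfolding X_def S_def s_def by (simp add: o_def)
  have vF: "(Fa a has_vector_derivative
      (of_real (-x/s) + 2*a* of_real (-1/s) - \<i>*(a - 1/a)*((-a*((1 - \<i>*(-X/S))/2)) * inverse (1 - a*((X - \<i>*S)/2))
             - (-a*((1 + \<i>*(-X/S))/2)) * inverse (1 - a*((X + \<i>*S)/2))))) (at x)"
    unfolding Fa_def[abs_def]
    by (intro has_vector_derivative_diff has_vector_derivative_add has_vector_derivative_mult_right vS vA vL1 vL2)
  have ss: "s\<^sup>2 = 4 - x\<^sup>2" unfolding s_def using x2 by simp
  have S2: "S*S = 4 - X*X"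
  proof -
    have "S*S = of_real (s\<^sup>2)" by (simp add: S_def power2_eq_square)
    also have "\<dots> = 4 - X*X" unfolding ss by (simp add: X_def power2_eq_square)
    finally show ?thesis .
  qed
  have S0: "S \<noteq> 0" using s0 S_def by simp
  have xz: "X - (a + 1/a) \<noteq> 0" using z unfolding X_def by (metis Im_complex_of_real eq_iff_diff_eq_0)
  have p1: "1 - a*((X - \<i>*S)/2) \<noteq> 0" using nn1 by auto
  have p2: "1 - a*((X + \<i>*S)/2) \<noteq> 0" using nn2 by auto
  have eq: "of_real (-x/s) + 2*a* of_real (-1/s) - \<i>*(a - 1/a)*((-a*((1 - \<i>*(-X/S))/2)) * inverse (1 - a*((X - \<i>*S)/2))
             - (-a*((1 + \<i>*(-X/S))/2)) * inverse (1 - a*((X + \<i>*S)/2))) = S / (X - (a + 1/a))"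
    using alg[OF S2 S0 a(2) p1 p2 xz] unfolding X_def S_def by simp
  show ?thesis using has_vector_derivative_eq_rhs[OF vF eq] unfolding S_def X_def s_def .
qed


lemma nn_u1: "cmod a < 1 \<Longrightarrow> -2 \<le> x \<Longrightarrow> x \<le> 2 \<Longrightarrow>
   1 - a*((of_real x - \<i> * of_real (sqrt (4 - x\<^sup>2)))/2) \<notin> \<real>\<^sub>\<le>\<^sub>0"
  by (rule notnonpos) (use cmod_u in auto)
lemma nn_u2: "cmod a < 1 \<Longrightarrow> -2 \<le> x \<Longrightarrow> x \<le> 2 \<Longrightarrow>
   1 - a*((of_real x + \<i> * of_real (sqrt (4 - x\<^sup>2)))/2) \<notin> \<real>\<^sub>\<le>\<^sub>0"
  by (rule notnonpos) (use cmod_u in auto)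

lemma Fa_cont: "cmod a < 1 \<Longrightarrow> continuous_on {-2..2} (Fa a)"
  unfolding Fa_def[abs_def]
  by (intro continuous_intros) (use nn_u1 nn_u2 in auto)

lemma Fa_2: "Fa a 2 = 0" by (simp add: Fa_def)
lemma Fa_m2: "Fa a (-2) = 2 * a * of_real pi" by (simp add: Fa_def)

lemma int_sc:
  assumes a: "cmod a < 1" "a \<noteq> 0" and z: "Im (a + 1/a) \<noteq> 0"
  shows "((\<lambda>x. of_real (sqrt (4 - x\<^sup>2)) / (of_real x - (a + 1/a))) has_integral (- 2 * a * of_real pi)) {-2..2}"
proof -
  have "((\<lambda>x. of_real (sqrt (4 - x\<^sup>2)) / (of_real x - (a + 1/a))) has_integral (Fa a 2 - Fa a (-2))) {-2..2}"
    by (rule fundamental_theorem_of_calculus_interior) (auto intro!: Fa_cont Fa_deriv a z)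
  then show ?thesis by (simp add: Fa_2 Fa_m2)
qed

lemma m_sc_eq:
  assumes z: "Im z > 0" and a: "cmod a < 1" and eq: "a*a - z*a + 1 = 0"
  shows "m_sc z = -a"
proof -
  have a0: "a \<noteq> 0" using eq by auto
  have za: "z = a + 1/a" using eq a0 by (simp add: field_simps)
  have zr: "complex_of_real x - z \<noteq> 0" for x using z by (metis Im_complex_of_real less_irrefl right_minus_eq)
  define g where "g = (\<lambda>x::real. (1/(2*pi)) *\<^sub>R (of_real (sqrt (4 - x\<^sup>2)) / (of_real x - z)))"
  have f_eq: "(\<lambda>x. complex_of_real (sc_density x) / (complex_of_real x - z)) = (\<lambda>x. indicator {-2..2} x *\<^sub>R g x)"
  proof
    fix x :: real
    show "complex_of_real (sc_density x) / (complex_of_real x - z) = indicator {-2..2} x *\<^sub>R g x"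
    proof (cases "x \<in> {-2..2}")
      case True
      then have "x\<^sup>2 \<le> 4" using sq_le4 by auto
      then show ?thesis using True by (simp add: sc_density_def g_def scaleR_conv_of_real field_simps)
    next
      case False
      then have "(x-2)*(x+2) > 0" by (auto intro: mult_pos_pos mult_neg_neg)
      then have "x\<^sup>2 > 4" by (simp add: power2_eq_square algebra_simps)
      then show ?thesis using False by (simp add: sc_density_def g_def)
    qed
  qed
  have gc: "continuous_on {-2..2} g" unfolding g_def
    by (intro continuous_intros) (use zr in auto)
  have gi: "(g has_integral (-a)) {-2..2}"
  proof -
    have "(g has_integral ((1/(2*pi)) *\<^sub>R (- 2 * a * of_real pi))) {-2..2}"
      unfolding g_def za by (rule has_integral_cmul, rule int_sc[OF a a0]) (use z za in simp)
    then show ?thesis by (simp add: scaleR_conv_of_real)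
  qed
  have si: "set_integrable lborel {-2..2} g" by (rule borel_integrable_atLeastAtMost'[OF gc])
  have h1: "((\<lambda>x. indicator {-2..2} x *\<^sub>R g x) has_integral (integral\<^sup>L lborel (\<lambda>x. indicator {-2..2} x *\<^sub>R g x))) UNIV"
    using si unfolding set_integrable_def by (rule has_integral_integral_lborel)
  have "((\<lambda>x. indicator {-2..2} x *\<^sub>R g x) has_integral (-a)) {-2..2}"
    using gi by (subst has_integral_cong[where g=g]) auto
  then have h2: "((\<lambda>x. indicator {-2..2} x *\<^sub>R g x) has_integral (-a)) UNIV"
    by (intro has_integral_on_superset[where T=UNIV and S="{-2..2}"]) auto
  have "integral\<^sup>L lborel (\<lambda>x. indicator {-2..2} x *\<^sub>R g x) = -a"
    using h1 h2 by (rule has_integral_unique)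
  then show ?thesis unfolding m_sc_def f_eq .
qed


lemma root_modne1:
  fixes a z :: complex
  assumes eq: "a*a - z*a + 1 = 0" and z: "Im z \<noteq> 0"
  shows "cmod a \<noteq> 1"
proof
  assume c: "cmod a = 1"
  have a0: "a \<noteq> 0" using eq by auto
  have za: "z = a + inverse a" using eq a0 by (simp add: field_simps)
  have "a * cnj a = 1" using complex_norm_square[of a] c by simp
  then have "inverse a = cnj a" by (rule inverse_unique)
  then have "Im z = 0" unfolding za by simp
  then show False using z by simp
qed

lemma root_exists:
  fixes z :: complex assumes z: "Im z \<noteq> 0"
  shows "\<exists>a. cmod a < 1 \<and> a*a - z*a + 1 = 0"
proof -
  define r where "r = csqrt (z*z - 4)"
  have r2: "r*r = z*z - 4" unfolding r_def by (metis power2_csqrt power2_eq_square)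
  define a1 where "a1 = (z + r)/2"
  define a2 where "a2 = (z - r)/2"
  have "a1*a1 - z*a1 + 1 = (r*r - z*z + 4)/4" unfolding a1_def by (simp add: field_simps)
  then have e1: "a1*a1 - z*a1 + 1 = 0" using r2 by simp
  have "a2*a2 - z*a2 + 1 = (r*r - z*z + 4)/4" unfolding a2_def by (simp add: field_simps)
  then have e2: "a2*a2 - z*a2 + 1 = 0" using r2 by simp
  have "a1*a2 = (z*z - r*r)/4" unfolding a1_def a2_def by (simp add: field_simps)
  then have p: "a1*a2 = 1" using r2 by simp
  have n1: "cmod a1 \<noteq> 1" by (rule root_modne1[OF e1 z])
  have pn: "cmod a1 * cmod a2 = 1" using p norm_mult[of a1 a2] by simp
  show ?thesis
  proof (cases "cmod a1 < 1")
    case True then show ?thesis using e1 by blast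
  next
    case False
    then have "cmod a1 > 1" using n1 by simp
    moreover have "cmod a2 = 1 / cmod a1"
      by (subst eq_divide_eq) (use pn \<open>cmod a1 > 1\<close> in \<open>auto simp: mult.commute\<close>)
    ultimately have "cmod a2 < 1" by (simp add: divide_less_eq)
    then show ?thesis using e2 by blast
  qed
qed

lemma msc_props:
  assumes z: "Im z > 0"
  shows "m_sc z * m_sc z + z * m_sc z + 1 = 0" "cmod (m_sc z) < 1" "m_sc z \<noteq> 0" "Im (m_sc z) > 0"
proof -
  obtain a where a: "cmod a < 1" "a*a - z*a + 1 = 0" using root_exists z by force
  have m: "m_sc z = -a" by (rule m_sc_eq[OF z a])
  show e: "m_sc z * m_sc z + z * m_sc z + 1 = 0" unfolding m using a(2) by simp
  show c: "cmod (m_sc z) < 1" unfolding m using a(1) by simp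
  show n: "m_sc z \<noteq> 0" using e by auto
  define m' where "m' = m_sc z"
  have h: "z*m' = -(m'*m' + 1)" using e unfolding m'_def[symmetric] by (simp add: eq_neg_iff_add_eq_0 algebra_simps)
  have n': "m' \<noteq> 0" using n unfolding m'_def .
  have "z = (z*m') * inverse m'" using n' by simp
  also have "\<dots> = -(m'*m' + 1) * inverse m'" unfolding h ..
  also have "\<dots> = -(m' + inverse m')" using n' by (simp add: algebra_simps)
  finally have zm: "z = -(m' + inverse m')" .
  define D where "D = (Re m')\<^sup>2 + (Im m')\<^sup>2"
  have "Im z = - (Im m' - Im m' / D)" unfolding zm D_def by simp
  also have "\<dots> = - Im m' * (1 - 1/D)" by (simp add: algebra_simps)
  finally have Iz: "Im z = - Im m' * (1 - 1/D)" .
  have "(cmod m')\<^sup>2 < 1" using c unfolding m'_def[symmetric] by (simp add: abs_square_less_1)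
  then have D1: "D < 1" unfolding D_def cmod_power2 .
  have "(cmod m')\<^sup>2 > 0" using n unfolding m'_def[symmetric] by simp
  then have D0: "D > 0" unfolding D_def cmod_power2 .
  have "1/D > 1" using D0 D1 by simp
  then have k: "1 - 1/D < 0" by simp
  have "0 < - Im m' * (1 - 1/D)" using z Iz by simp
  then have "Im m' * (1 - 1/D) < 0" by simp
  then have "Im m' > 0" using k mult_less_0_iff[of "Im m'" "1 - 1/D"] by linarith
  then show "Im (m_sc z) > 0" unfolding m'_def .
qed

lemma m_bd_eq:
  assumes E: "\<bar>E\<bar> < 2"
  shows "m_bd E = complex_of_real (-E/2) + \<i> * complex_of_real (sqrt (4 - E\<^sup>2)/2)"
proof -
  define mE where "mE = complex_of_real (-E/2) + \<i> * complex_of_real (sqrt (4 - E\<^sup>2)/2)"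
  define q where "q = sqrt (4 - E\<^sup>2)/2"
  have E2: "E\<^sup>2 < 4" using E sq_less4 by auto
  have q0: "q > 0" unfolding q_def using E2 by simp
  have ImE: "Im mE = q" unfolding mE_def q_def by simp
  have sum: "mE + cnj mE = - of_real E" unfolding mE_def by (simp add: complex_eq_iff)
  have prod: "mE * cnj mE = 1"
  proof -
    have "mE * cnj mE = complex_of_real ((Re mE)\<^sup>2 + (Im mE)\<^sup>2)" by (rule complex_mult_cnj)
    also have "(Re mE)\<^sup>2 + (Im mE)\<^sup>2 = 1"
    proof -
      have "(sqrt (4 - E\<^sup>2))\<^sup>2 = 4 - E\<^sup>2" using E2 by simp
      then show ?thesis unfolding mE_def by (simp add: power_divide, simp add: field_simps)
    qed
    finally show ?thesis by simp
  qed
  define f where "f = (\<lambda>\<epsilon>::real. m_sc (complex_of_real E + \<i> * complex_of_real \<epsilon>))"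
  have bound: "cmod (f \<epsilon> - mE) \<le> \<epsilon> / q" if e: "\<epsilon> > 0" for \<epsilon>
  proof -
    define z where "z = complex_of_real E + \<i> * complex_of_real \<epsilon>"
    have zI: "Im z > 0" unfolding z_def using e by simp
    define m where "m = f \<epsilon>"
    have m: "m = m_sc z" unfolding m_def f_def z_def ..
    note P = msc_props[OF zI, folded m]
    have fac: "(m - mE) * (m - cnj mE) = - (\<i> * complex_of_real \<epsilon> * m)"
    proof -
      have "(m - mE) * (m - cnj mE) = m*m - (mE + cnj mE)*m + mE * cnj mE" by (simp add: algebra_simps)
      also have "\<dots> = m*m + of_real E * m + 1" unfolding sum prod by simp
      also have "\<dots> = - (\<i> * complex_of_real \<epsilon> * m)" using P(1) unfolding z_def by (simp add: eq_neg_iff_add_eq_0 algebra_simps)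
      finally show ?thesis .
    qed
    have "cmod (m - mE) * cmod (m - cnj mE) = cmod ((m - mE) * (m - cnj mE))" by (simp add: norm_mult)
    also have "\<dots> = cmod (\<i> * complex_of_real \<epsilon> * m)" unfolding fac by (simp only: norm_minus_cancel)
    also have "\<dots> = \<epsilon> * cmod m" using e by (simp add: norm_mult)
    finally have "cmod (m - mE) * cmod (m - cnj mE) = \<epsilon> * cmod m" .
    also have "\<dots> \<le> \<epsilon>" using P(2) e by (simp add: mult_le_cancel_left1 less_imp_le)
    finally have A: "cmod (m - mE) * cmod (m - cnj mE) \<le> \<epsilon>" .
    have B: "cmod (m - cnj mE) \<ge> q"
    proof -
      have "Im (m - cnj mE) = Im m + q" using ImE by simp
      then have "Im (m - cnj mE) \<ge> q" using P(4) by simp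
      then show ?thesis using abs_Im_le_cmod[of "m - cnj mE"] by linarith
    qed
    have "cmod (m - mE) * q \<le> \<epsilon>"
      using A B by (meson mult_left_mono norm_ge_zero order_trans)
    then show ?thesis unfolding m_def using q0 by (simp add: field_simps)
  qed
  have "((\<lambda>\<epsilon>. \<epsilon> / q) \<longlongrightarrow> 0 / q) (at_right 0)"
    using q0 by (intro tendsto_divide tendsto_ident_at tendsto_const) auto
  then have lim0: "((\<lambda>\<epsilon>. \<epsilon> / q) \<longlongrightarrow> 0) (at_right 0)" by simp
  have "((\<lambda>\<epsilon>. f \<epsilon> - mE) \<longlongrightarrow> 0) (at_right 0)"
  proof (rule Lim_null_comparison[OF _ lim0])
    show "\<forall>\<^sub>F \<epsilon> in at_right 0. norm (f \<epsilon> - mE) \<le> \<epsilon> / q"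
      using eventually_at_right_less[of "0::real"] by eventually_elim (use bound in auto)
  qed
  then have "(f \<longlongrightarrow> mE) (at_right 0)" by (rule LIM_zero_cancel)
  then have "Lim (at_right 0) f = mE" by (rule tendsto_Lim[rotated]) simp
  then show ?thesis unfolding m_bd_def f_def mE_def .
qed


lemma analytic_part:
  fixes \<kappa> :: real and z :: complex
  assumes \<kappa>: "\<kappa> > 0" and z: "0 < Im z" "Im z \<le> 1" "\<bar>Re z\<bar> \<le> 2 - \<kappa>"
  shows "\<exists>r E. r > 0 \<and> \<bar>E\<bar> \<le> 2 - \<kappa> \<and> 0 \<le> r\<^sup>2 \<and> r\<^sup>2 < 1 \<and>
     z = complex_of_real (1 / sqrt (r\<^sup>2)) * z_flow E (r\<^sup>2) \<and>
     1/16 \<le> r\<^sup>2 \<and> 1/16 * Im z \<le> Im (z_flow E (r\<^sup>2)) \<and> Im (z_flow E (r\<^sup>2)) \<le> Im z / (1/16) \<and>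
     m_sc z = complex_of_real (sqrt (r\<^sup>2)) * m_bd E \<and> z_flow E (r\<^sup>2) = complex_of_real r * z"
proof -
  define m where "m = m_sc z"
  note P = msc_props[OF z(1), folded m_def]
  define r where "r = cmod m"
  define a where "a = Re m"
  define b where "b = Im m"
  have r0: "r > 0" using P(3) unfolding r_def by simp
  have r1: "r < 1" using P(2) unfolding r_def .
  have b0: "b > 0" using P(4) unfolding b_def .
  have r2: "r\<^sup>2 = a\<^sup>2 + b\<^sup>2" unfolding r_def a_def b_def by (rule cmod_power2)
  define E where "E = -2 * a / r"
  have sr: "sqrt (r\<^sup>2) = r" using r0 by simp
  have zm: "z = -(m + inverse m)"
  proof -
    have h: "z*m = -(m*m + 1)" using P(1) by (simp add: eq_neg_iff_add_eq_0 algebra_simps)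
    have "z = (z*m) * inverse m" using P(3) by simp
    also have "\<dots> = -(m*m + 1) * inverse m" unfolding h ..
    also have "\<dots> = -(m + inverse m)" using P(3) by (simp add: algebra_simps)
    finally show ?thesis .
  qed
  have Rez: "Re z = -(a + a / r\<^sup>2)" unfolding zm r2 a_def b_def by simp
  have Imz: "Im z = -(b - b / r\<^sup>2)" unfolding zm r2 a_def b_def by simp
  have r2': "r*r = a*a + b*b" using r2 by (simp add: power2_eq_square)
  have ab: "\<bar>a\<bar> < r"
  proof -
    have "\<bar>a\<bar>\<^sup>2 < r\<^sup>2" unfolding r2 using b0 by simp
    then show ?thesis by (rule power_less_imp_less_base) (use r0 in simp)
  qed
  have absE: "\<bar>E\<bar> = 2 * \<bar>a\<bar> / r" unfolding E_def using r0 by (simp add: abs_mult)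
  have E2: "\<bar>E\<bar> < 2" unfolding absE using ab r0 by (simp add: divide_less_eq)
  have sq: "sqrt (4 - E\<^sup>2) = 2 * b / r"
  proof (rule real_sqrt_unique)
    have ne: "a*a + b*b \<noteq> 0" using r0 unfolding r2'[symmetric] by simp
    show "(2 * b / r)\<^sup>2 = 4 - E\<^sup>2" unfolding E_def using r0 r2' ne
      by (simp add: field_simps power2_eq_square)
    show "0 \<le> 2 * b / r" using b0 r0 by simp
  qed
  have mbd: "m_bd E = m / complex_of_real r"
    unfolding m_bd_eq[OF E2] sq using r0 by (simp add: complex_eq_iff a_def b_def E_def)
  have zf: "z_flow E (r\<^sup>2) = complex_of_real r * z"
  proof (rule complex_eqI)
    have "Re (z_flow E (r\<^sup>2)) = E + (1 - r\<^sup>2) * (a / r)" unfolding z_flow_def mbd by (simp add: a_def)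
    also have "\<dots> = r * Re z" unfolding Rez E_def using r0 by (simp add: field_simps power2_eq_square)
    finally show "Re (z_flow E (r\<^sup>2)) = Re (complex_of_real r * z)" by simp
    have "Im (z_flow E (r\<^sup>2)) = (1 - r\<^sup>2) * (b / r)" unfolding z_flow_def mbd by (simp add: b_def)
    also have "\<dots> = r * Im z" unfolding Imz using r0 by (simp add: field_simps power2_eq_square)
    finally show "Im (z_flow E (r\<^sup>2)) = Im (complex_of_real r * z)" by simp
  qed
  have Eb: "\<bar>E\<bar> \<le> 2 - \<kappa>"
  proof -
    have "0 \<le> (1 - 1/r)\<^sup>2" by simp
    also have "(1 - 1/r)\<^sup>2 = 1 + 1/r\<^sup>2 - 2/r" using r0 by (simp add: field_simps power2_eq_square)
    finally have k: "2/r \<le> 1 + 1/r\<^sup>2" by simp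
    have "\<bar>E\<bar> = \<bar>a\<bar> * (2/r)" unfolding absE by simp
    also have "\<dots> \<le> \<bar>a\<bar> * (1 + 1/r\<^sup>2)" using k by (rule mult_left_mono) simp
    also have "\<dots> = \<bar>Re z\<bar>" unfolding Rez
    proof -
      have "\<bar>-(a + a / r\<^sup>2)\<bar> = \<bar>a * (1 + 1/r\<^sup>2)\<bar>" by (simp add: algebra_simps)
      also have "\<dots> = \<bar>a\<bar> * (1 + 1/r\<^sup>2)" by (simp add: abs_mult add_pos_nonneg)
      finally show "\<bar>a\<bar> * (1 + 1/r\<^sup>2) = \<bar>-(a + a / r\<^sup>2)\<bar>" by simp
    qed
    finally show ?thesis using z(3) by simp
  qed
  have r4: "r \<ge> 1/4"
  proof -
    have "m * (m + z) = -1" using P(1) by (simp add: algebra_simps eq_neg_iff_add_eq_0)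
    then have e1: "r * cmod (m + z) = 1" unfolding r_def by (metis norm_minus_cancel norm_mult norm_one)
    have "cmod z \<le> \<bar>Re z\<bar> + \<bar>Im z\<bar>" by (rule cmod_le)
    also have "\<dots> \<le> 3" using z \<kappa> by simp
    finally have cz: "cmod z \<le> 3" .
    have "cmod (m + z) \<le> cmod m + cmod z" by (rule norm_triangle_ineq)
    also have "\<dots> \<le> 4" using cz P(2) by simp
    finally have "cmod (m + z) \<le> 4" .
    then have "r * cmod (m + z) \<le> r * 4" using r0 by simp
    then show ?thesis using e1 by simp
  qed
  have t16: "1/16 \<le> r\<^sup>2"
  proof -
    have "(1/4::real)\<^sup>2 \<le> r\<^sup>2" by (rule power_mono[OF r4]) simp
    then show ?thesis by (simp add: power_divide)
  qed
  have Imf: "Im (z_flow E (r\<^sup>2)) = r * Im z" unfolding zf by simp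
  have c4: "r\<^sup>2 < 1" using r0 r1 by (simp add: power_less_one_iff)
  have c5: "z = complex_of_real (1 / sqrt (r\<^sup>2)) * z_flow E (r\<^sup>2)" unfolding zf sr using r0 by simp
  have c7: "1/16 * Im z \<le> Im (z_flow E (r\<^sup>2))" unfolding Imf using r4 z(1) by simp
  have c8: "Im (z_flow E (r\<^sup>2)) \<le> Im z / (1/16)" unfolding Imf using r1 z(1) by simp
  have c9: "m_sc z = complex_of_real (sqrt (r\<^sup>2)) * m_bd E" unfolding sr mbd m_def[symmetric] using r0 by simp
  have c3: "0 \<le> r\<^sup>2" by simp
  show ?thesis using r0 Eb c3 c4 c5 t16 c7 c8 c9 zf by blast
qed


lemma herm_kernel:
  fixes A :: "nat \<Rightarrow> nat \<Rightarrow> complex" and v :: "nat \<Rightarrow> complex"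
  assumes herm: "\<And>i j. i < N \<Longrightarrow> j < N \<Longrightarrow> A j i = cnj (A i j)" and z: "Im z \<noteq> 0"
    and kv: "\<And>i. i < N \<Longrightarrow> (\<Sum>k<N. (A i k - (if i = k then z else 0)) * v k) = 0"
  shows "\<forall>k<N. v k = 0"
proof -
  have Av: "(\<Sum>k<N. A i k * v k) = z * v i" if "i < N" for i
  proof -
    have "(\<Sum>k<N. (A i k - (if i = k then z else 0)) * v k) = (\<Sum>k<N. A i k * v k) - (\<Sum>k<N. (if i = k then z else 0) * v k)"
      by (simp add: sum_subtractf left_diff_distrib)
    also have "(\<Sum>k<N. (if i = k then z else 0) * v k) = (\<Sum>k<N. (if i = k then z * v k else 0))"
      by (intro sum.cong refl) simp
    also have "\<dots> = z * v i" using that by (simp add: sum.delta)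
    finally show ?thesis using kv[OF that] by simp
  qed
  define Q where "Q = (\<Sum>i<N. cnj (v i) * (\<Sum>k<N. A i k * v k))"
  have Q1: "Q = z * complex_of_real (\<Sum>i<N. (cmod (v i))\<^sup>2)"
  proof -
    have "Q = (\<Sum>i<N. z * (v i * cnj (v i)))" unfolding Q_def
    proof (intro sum.cong refl)
      fix i assume "i \<in> {..<N}"
      then have "cnj (v i) * (\<Sum>k<N. A i k * v k) = cnj (v i) * (z * v i)" using Av[of i] by simp
      then show "cnj (v i) * (\<Sum>k<N. A i k * v k) = z * (v i * cnj (v i))" by (simp add: mult_ac)
    qed
    also have "\<dots> = z * (\<Sum>i<N. complex_of_real ((cmod (v i))\<^sup>2))"
      unfolding complex_norm_square by (rule sum_distrib_left[symmetric])
    finally show ?thesis by (simp only: of_real_sum)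
  qed
  have Q2: "cnj Q = Q"
  proof -
    have "cnj Q = (\<Sum>i<N. v i * (\<Sum>k<N. cnj (A i k) * cnj (v k)))" unfolding Q_def
      by simp
    also have "\<dots> = (\<Sum>i<N. v i * (\<Sum>k<N. A k i * cnj (v k)))"
    proof (intro sum.cong refl)
      fix i assume i: "i \<in> {..<N}"
      have "(\<Sum>k<N. cnj (A i k) * cnj (v k)) = (\<Sum>k<N. A k i * cnj (v k))"
        by (rule sum.cong[OF refl]) (use i in \<open>simp add: herm[of i]\<close>)
      then show "v i * (\<Sum>k<N. cnj (A i k) * cnj (v k)) = v i * (\<Sum>k<N. A k i * cnj (v k))" by simp
    qed
    also have "\<dots> = (\<Sum>i<N. \<Sum>k<N. v i * (A k i * cnj (v k)))"
      by (simp only: sum_distrib_left)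
    also have "\<dots> = (\<Sum>k<N. \<Sum>i<N. v i * (A k i * cnj (v k)))"
      by (rule sum.swap)
    also have "\<dots> = (\<Sum>k<N. cnj (v k) * (\<Sum>i<N. A k i * v i))"
      unfolding sum_distrib_left by (intro sum.cong refl) (simp only: mult.commute mult.left_commute)
    also have "\<dots> = Q" unfolding Q_def ..
    finally show ?thesis .
  qed
  have "Im (cnj Q) = Im Q" using Q2 by simp
  then have "Im Q = 0" by simp
  then have "Im z * (\<Sum>i<N. (cmod (v i))\<^sup>2) = 0" using Q1 by simp
  then have S0: "(\<Sum>i<N. (cmod (v i))\<^sup>2) = 0" using z by simp
  have "\<forall>i\<in>{..<N}. (cmod (v i))\<^sup>2 = 0"
    using sum_nonneg_eq_0_iff[of "{..<N}" "\<lambda>i. (cmod (v i))\<^sup>2"] S0 by simp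
  then show ?thesis by simp
qed


definition inv_pred :: "nat \<Rightarrow> (nat \<Rightarrow> nat \<Rightarrow> complex) \<Rightarrow> (nat \<Rightarrow> nat \<Rightarrow> complex) \<Rightarrow> bool" where
  "inv_pred N A B \<longleftrightarrow> (\<forall>i<N. \<forall>j<N. (\<Sum>k<N. A i k * B k j) = (if i = j then 1 else 0)) \<and>
                         (\<forall>i j. \<not> (i < N \<and> j < N) \<longrightarrow> B i j = 0)"

definition kernel_triv :: "nat \<Rightarrow> (nat \<Rightarrow> nat \<Rightarrow> complex) \<Rightarrow> bool" where
  "kernel_triv N A \<longleftrightarrow> (\<forall>v. (\<forall>i<N. (\<Sum>k<N. A i k * v k) = 0) \<longrightarrow> (\<forall>k<N. v k = 0))"

lemma mat_inv_unique:
  assumes ker: "kernel_triv N A" and P: "inv_pred N A C"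
  shows "mat_inv N A = C"
proof -
  have "mat_inv N A = (THE B. inv_pred N A B)" unfolding mat_inv_def inv_pred_def ..
  also have "\<dots> = C"
  proof (rule the_equality)
  show "inv_pred N A C" by (rule P)
  next
  fix B assume B: "inv_pred N A B"
  show "B = C"
  proof (intro ext)
    fix i j
    show "B i j = C i j"
    proof (cases "i < N \<and> j < N")
      case True
      define v where "v = (\<lambda>k. B k j - C k j)"
      have "\<forall>l<N. (\<Sum>k<N. A l k * v k) = 0"
      proof (intro allI impI)
        fix l assume l: "l < N"
        have "(\<Sum>k<N. A l k * v k) = (\<Sum>k<N. A l k * B k j) - (\<Sum>k<N. A l k * C k j)"
          unfolding v_def by (simp add: sum_subtractf right_diff_distrib)
        also have "\<dots> = 0" using B P l True unfolding inv_pred_def by simp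
        finally show "(\<Sum>k<N. A l k * v k) = 0" .
      qed
      then have "\<forall>k<N. v k = 0" using ker unfolding kernel_triv_def by blast
      then show ?thesis using True unfolding v_def by simp
    next
      case False
      then show ?thesis using B P unfolding inv_pred_def by simp
    qed
  qed
  qed
  finally show ?thesis .
qed

definition cmat :: "nat \<Rightarrow> (nat \<Rightarrow> nat \<Rightarrow> complex) \<Rightarrow> complex Matrix.mat" where
  "cmat N A = Matrix.mat N N (\<lambda>(i,j). A i j)"

definition cramer :: "nat \<Rightarrow> (nat \<Rightarrow> nat \<Rightarrow> complex) \<Rightarrow> nat \<Rightarrow> nat \<Rightarrow> complex" where
  "cramer N A i j = (if i < N \<and> j < N then adj_mat (cmat N A) $$ (i,j) / Determinant.det (cmat N A) else 0)"

lemma cmat_carrier: "cmat N A \<in> carrier_mat N N" unfolding cmat_def by simp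

lemma det_ne0:
  assumes ker: "kernel_triv N A"
  shows "Determinant.det (cmat N A) \<noteq> 0"
proof
  assume "Determinant.det (cmat N A) = 0"
  then obtain v where v: "v \<in> carrier_vec N" "v \<noteq> 0\<^sub>v N" "cmat N A *\<^sub>v v = 0\<^sub>v N"
    using det_0_iff_vec_prod_zero[OF cmat_carrier] by blast
  have "\<forall>i<N. (\<Sum>k<N. A i k * v $ k) = 0"
  proof (intro allI impI)
    fix i assume i: "i < N"
    have "(cmat N A *\<^sub>v v) $ i = 0" using v(3) i by simp
    moreover have "(cmat N A *\<^sub>v v) $ i = (\<Sum>k<N. A i k * v $ k)"
      using i v(1) unfolding cmat_def by (simp add: scalar_prod_def atLeast0LessThan)
    ultimately show "(\<Sum>k<N. A i k * v $ k) = 0" by simp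
  qed
  then have "\<forall>k<N. v $ k = 0" using ker unfolding kernel_triv_def by blast
  then have "v = 0\<^sub>v N" using v(1) by (intro eq_vecI) auto
  then show False using v(2) by simp
qed

lemma cramer_inv:
  assumes ker: "kernel_triv N A"
  shows "inv_pred N A (cramer N A)"
proof -
  define M where "M = cmat N A"
  have MC: "M \<in> carrier_mat N N" unfolding M_def by (rule cmat_carrier)
  have d: "Determinant.det M \<noteq> 0" unfolding M_def by (rule det_ne0[OF ker])
  have adj: "M * adj_mat M = Determinant.det M \<cdot>\<^sub>m 1\<^sub>m N" by (rule adj_mat(2)[OF MC])
  have AC: "adj_mat M \<in> carrier_mat N N" by (rule adj_mat(1)[OF MC])
  have "(\<Sum>k<N. A i k * cramer N A k j) = (if i = j then 1 else 0)" if ij: "i < N" "j < N" for i j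
  proof -
    have "(M * adj_mat M) $$ (i,j) = (\<Sum>k<N. A i k * adj_mat M $$ (k,j))"
      using ij MC AC unfolding M_def cmat_def by (simp add: scalar_prod_def atLeast0LessThan)
    moreover have "(M * adj_mat M) $$ (i,j) = Determinant.det M * (if i = j then 1 else 0)"
      unfolding adj using ij by simp
    ultimately have e: "(\<Sum>k<N. A i k * adj_mat M $$ (k,j)) = Determinant.det M * (if i = j then 1 else 0)" by simp
    have "(\<Sum>k<N. A i k * cramer N A k j) = (\<Sum>k<N. A i k * adj_mat M $$ (k,j)) / Determinant.det M"
      unfolding cramer_def M_def[symmetric] using ij by (simp add: sum_divide_distrib)
    also have "\<dots> = (if i = j then 1 else 0)" unfolding e using d by simp
    finally show ?thesis .
  qed
  then show ?thesis unfolding inv_pred_def cramer_def by auto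
qed

lemma mat_inv_cramer: "kernel_triv N A \<Longrightarrow> mat_inv N A = cramer N A"
  by (rule mat_inv_unique[OF _ cramer_inv])

lemma mat_inv_scale:
  assumes ker: "kernel_triv N A" and c: "c \<noteq> 0"
  shows "mat_inv N (\<lambda>i j. c * A i j) = (\<lambda>i j. mat_inv N A i j / c)"
proof (rule mat_inv_unique)
  show "kernel_triv N (\<lambda>i j. c * A i j)"
    unfolding kernel_triv_def
  proof (rule allI, rule impI)
    fix v assume h: "\<forall>i<N. (\<Sum>k<N. c * A i k * v k) = 0"
    have "\<forall>i<N. (\<Sum>k<N. A i k * v k) = 0"
    proof (intro allI impI)
      fix i assume "i < N"
      then have "c * (\<Sum>k<N. A i k * v k) = 0" using h by (simp add: sum_distrib_left mult_ac)
      then show "(\<Sum>k<N. A i k * v k) = 0" using c by simp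
    qed
    then show "\<forall>k<N. v k = 0" using ker unfolding kernel_triv_def by blast
  qed
  have P: "inv_pred N A (mat_inv N A)" using cramer_inv[OF ker] mat_inv_cramer[OF ker] by simp
  show "inv_pred N (\<lambda>i j. c * A i j) (\<lambda>i j. mat_inv N A i j / c)"
    unfolding inv_pred_def
  proof (intro conjI allI impI)
    fix i j assume "i < N" "j < N"
    then have "(\<Sum>k<N. A i k * mat_inv N A k j) = (if i = j then 1 else 0)" using P unfolding inv_pred_def by blast
    moreover have "(\<Sum>k<N. c * A i k * (mat_inv N A k j / c)) = (\<Sum>k<N. A i k * mat_inv N A k j)"
      using c by (intro sum.cong refl) simp
    ultimately show "(\<Sum>k<N. c * A i k * (mat_inv N A k j / c)) = (if i = j then 1 else 0)"
      by simp
  next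
    fix i j assume "\<not> (i < N \<and> j < N)"
    then show "mat_inv N A i j / c = 0" using P unfolding inv_pred_def by simp
  qed
qed

lemma mat_inv_cong:
  assumes "\<And>i j. i < N \<Longrightarrow> j < N \<Longrightarrow> A i j = B i j"
  shows "mat_inv N A = mat_inv N B"
proof -
  have sums: "(\<Sum>k<N. A i k * C k j) = (\<Sum>k<N. B i k * C k j)" if "i < N" for i j C
    using that assms by (intro sum.cong refl) simp
  have "(\<forall>i<N. \<forall>j<N. (\<Sum>k<N. A i k * C k j) = (if i = j then 1 else 0)) \<longleftrightarrow>
        (\<forall>i<N. \<forall>j<N. (\<Sum>k<N. B i k * C k j) = (if i = j then 1 else 0))" for C
    by (simp add: sums)
  then show ?thesis unfolding mat_inv_def by simp
qed


lemma det_meas: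
  fixes F :: "'x \<Rightarrow> complex Matrix.mat"
  assumes C: "\<And>x. F x \<in> carrier_mat n n"
    and E: "\<And>i j. i < n \<Longrightarrow> j < n \<Longrightarrow> (\<lambda>x. F x $$ (i,j)) \<in> borel_measurable \<Omega>"
  shows "(\<lambda>x. Determinant.det (F x)) \<in> borel_measurable \<Omega>"
proof -
  have eq: "(\<lambda>x. Determinant.det (F x)) = (\<lambda>x. \<Sum>p \<in> {p. p permutes {0..<n}}. signof p * (\<Prod>i = 0..<n. F x $$ (i, p i)))"
    using det_def'[OF C] by (intro ext) auto
  have "(\<lambda>x. \<Sum>p \<in> {p. p permutes {0..<n}}. signof p * (\<Prod>i = 0..<n. F x $$ (i, p i))) \<in> borel_measurable \<Omega>"
  proof (rule borel_measurable_sum)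
    fix p assume p: "p \<in> {p. p permutes {0..<n}}"
    have "(\<lambda>x. \<Prod>i = 0..<n. F x $$ (i, p i)) \<in> borel_measurable \<Omega>"
    proof (rule borel_measurable_prod)
      fix i assume i: "i \<in> {0..<n}"
      then have "p i < n" using p permutes_in_image by fastforce
      then show "(\<lambda>x. F x $$ (i, p i)) \<in> borel_measurable \<Omega>" using E i by auto
    qed
    then show "(\<lambda>x. signof p * (\<Prod>i = 0..<n. F x $$ (i, p i))) \<in> borel_measurable \<Omega>"
      by (intro borel_measurable_times borel_measurable_const)
  qed
  then show ?thesis unfolding eq .
qed

lemma adj_meas:
  fixes F :: "'x \<Rightarrow> complex Matrix.mat"
  assumes C: "\<And>x. F x \<in> carrier_mat n n"
    and E: "\<And>i j. i < n \<Longrightarrow> j < n \<Longrightarrow> (\<lambda>x. F x $$ (i,j)) \<in> borel_measurable \<Omega>"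
    and ij: "i < n" "j < n"
  shows "(\<lambda>x. adj_mat (F x) $$ (i,j)) \<in> borel_measurable \<Omega>"
proof -
  have eq: "adj_mat (F x) $$ (i,j) = (- 1) ^ (j + i) * Determinant.det (mat_delete (F x) j i)" for x
    using C[of x] ij unfolding adj_mat_def cofactor_def by auto
  have "(\<lambda>x. Determinant.det (mat_delete (F x) j i)) \<in> borel_measurable \<Omega>"
  proof (rule det_meas)
    show "mat_delete (F x) j i \<in> carrier_mat (n-1) (n-1)" for x by (rule mat_delete_carrier[OF C])
    fix a b assume ab: "a < n - 1" "b < n - 1"
    have e2: "mat_delete (F x) j i $$ (a,b) = F x $$ (if a < j then a else Suc a, if b < i then b else Suc b)" for x
      using C[of x] ab unfolding mat_delete_def by auto
    have "(\<lambda>x. F x $$ (if a < j then a else Suc a, if b < i then b else Suc b)) \<in> borel_measurable \<Omega>"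
      by (rule E) (use ab in auto)
    then show "(\<lambda>x. mat_delete (F x) j i $$ (a,b)) \<in> borel_measurable \<Omega>" unfolding e2 .
  qed
  then show ?thesis unfolding eq by (intro borel_measurable_times borel_measurable_const)
qed

lemma gauss_herm: "gauss_mat W L s X Y j i = cnj (gauss_mat W L s X Y i j)"
  unfolding gauss_mat_def by (cases i j rule: linorder_cases) auto

lemma gauss_scale:
  assumes "t \<ge> 0"
  shows "gauss_mat W L t X Y i j = complex_of_real (sqrt t) * gauss_mat W L 1 X Y i j"
  unfolding gauss_mat_def using assms by (auto simp: real_sqrt_mult)

lemma gauss_cong:
  assumes "\<And>a b. a \<le> b \<Longrightarrow> b < N \<Longrightarrow> X a b = X' a b \<and> Y a b = Y' a b" and "i < N" "j < N"
  shows "gauss_mat W L s X Y i j = gauss_mat W L s X' Y' i j"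
  unfolding gauss_mat_def using assms by (cases i j rule: linorder_cases) auto

definition Gz :: "nat \<Rightarrow> nat \<Rightarrow> (nat \<Rightarrow> nat \<Rightarrow> real) \<Rightarrow> (nat \<Rightarrow> nat \<Rightarrow> real) \<Rightarrow> complex \<Rightarrow> nat \<Rightarrow> nat \<Rightarrow> complex" where
  "Gz W L X Y z = (\<lambda>i j. gauss_mat W L 1 X Y i j - (if i = j then z else 0))"

lemma Gz_ker:
  assumes z: "Im z \<noteq> 0" shows "kernel_triv N (Gz W L X Y z)"
  unfolding kernel_triv_def Gz_def
proof (rule allI, rule impI)
  fix v assume kv: "\<forall>i<N. (\<Sum>k<N. (gauss_mat W L 1 X Y i k - (if i = k then z else 0)) * v k) = 0"
  show "\<forall>k<N. v k = 0"
  proof (rule herm_kernel[where A="gauss_mat W L 1 X Y" and z=z])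
    show "\<And>i j. i < N \<Longrightarrow> j < N \<Longrightarrow> gauss_mat W L 1 X Y j i = cnj (gauss_mat W L 1 X Y i j)"
      by (rule gauss_herm)
    show "Im z \<noteq> 0" by (rule z)
    show "\<And>i. i < N \<Longrightarrow> (\<Sum>k<N. (gauss_mat W L 1 X Y i k - (if i = k then z else 0)) * v k) = 0"
      using kv by blast
  qed
qed

lemma resolvent_Gz: "resolvent N (gauss_mat W L 1 X Y) z = mat_inv N (Gz W L X Y z)"
  unfolding resolvent_def Gz_def ..

definition Kidx :: "nat \<Rightarrow> (nat \<times> nat + nat \<times> nat) set" where
  "Kidx N = Inl ` upper_idx N \<union> Inr ` upper_idx N"

definition Xl :: "(nat \<times> nat + nat \<times> nat \<Rightarrow> real) \<Rightarrow> nat \<Rightarrow> nat \<Rightarrow> real" where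
  "Xl f a b = f (Inl (a,b))"
definition Yl :: "(nat \<times> nat + nat \<times> nat \<Rightarrow> real) \<Rightarrow> nat \<Rightarrow> nat \<Rightarrow> real" where
  "Yl f a b = f (Inr (a,b))"

lemma gm_meas:
  assumes ij: "i < N" "j < N"
  shows "(\<lambda>f. gauss_mat W L 1 (Xl f) (Yl f) i j) \<in> borel_measurable (PiM (Kidx N) (\<lambda>_. borel))"
proof -
  have cl: "(\<lambda>f. f (Inl (a,b))) \<in> borel_measurable (PiM (Kidx N) (\<lambda>_. (borel :: real measure)))"
    if "a \<le> b" "b < N" for a b
    by (rule measurable_component_singleton) (use that in \<open>auto simp: Kidx_def upper_idx_def\<close>)
  have cr: "(\<lambda>f. f (Inr (a,b))) \<in> borel_measurable (PiM (Kidx N) (\<lambda>_. (borel :: real measure)))"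
    if "a \<le> b" "b < N" for a b
    by (rule measurable_component_singleton) (use that in \<open>auto simp: Kidx_def upper_idx_def\<close>)
  show ?thesis
  proof (cases i j rule: linorder_cases)
    case less
    note c = cl[of i j] cr[of i j]
    show ?thesis using less ij c unfolding gauss_mat_def Xl_def Yl_def by simp measurable
  next
    case equal
    note c = cl[of i j] cr[of i j]
    show ?thesis using equal ij c unfolding gauss_mat_def Xl_def Yl_def by simp measurable
  next
    case greater
    note c = cl[of j i] cr[of j i]
    show ?thesis using greater ij c unfolding gauss_mat_def Xl_def Yl_def by simp measurable
  qed
qed


definition Phi :: "nat \<Rightarrow> nat \<Rightarrow> nat \<Rightarrow> complex \<Rightarrow> (nat \<times> nat + nat \<times> nat \<Rightarrow> real) \<Rightarrow> (nat \<times> nat \<Rightarrow> complex)" where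
  "Phi W L N z f = (\<lambda>(i,j)\<in>{..<N} \<times> {..<N}. resolvent N (gauss_mat W L 1 (Xl f) (Yl f)) z i j)"

lemma Phi_meas:
  assumes z: "Im z \<noteq> 0"
  shows "Phi W L N z \<in> measurable (PiM (Kidx N) (\<lambda>_. borel)) (PiM ({..<N} \<times> {..<N}) (\<lambda>_. borel))"
proof -
  have ent: "(\<lambda>f. resolvent N (gauss_mat W L 1 (Xl f) (Yl f)) z i j) \<in> borel_measurable (PiM (Kidx N) (\<lambda>_. borel))"
    if ij: "i < N" "j < N" for i j
  proof -
    have e: "resolvent N (gauss_mat W L 1 (Xl f) (Yl f)) z i j =
       adj_mat (cmat N (Gz W L (Xl f) (Yl f) z)) $$ (i,j) / Determinant.det (cmat N (Gz W L (Xl f) (Yl f) z))" for f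
      unfolding resolvent_Gz mat_inv_cramer[OF Gz_ker[OF z]] cramer_def using ij by simp
    have em: "(\<lambda>f. cmat N (Gz W L (Xl f) (Yl f) z) $$ (a,b)) \<in> borel_measurable (PiM (Kidx N) (\<lambda>_. borel))"
      if ab: "a < N" "b < N" for a b
    proof -
      have "cmat N (Gz W L (Xl f) (Yl f) z) $$ (a,b) = gauss_mat W L 1 (Xl f) (Yl f) a b - (if a = b then z else 0)" for f
        unfolding cmat_def Gz_def using ab by simp
      moreover have "(\<lambda>f. gauss_mat W L 1 (Xl f) (Yl f) a b - (if a = b then z else 0)) \<in> borel_measurable (PiM (Kidx N) (\<lambda>_. borel))"
        by (intro borel_measurable_diff gm_meas ab borel_measurable_const)
      ultimately show ?thesis by simp
    qed
    show ?thesis unfolding e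
    proof (rule borel_measurable_divide)
      show "(\<lambda>f. adj_mat (cmat N (Gz W L (Xl f) (Yl f) z)) $$ (i, j)) \<in> borel_measurable (PiM (Kidx N) (\<lambda>_. borel))"
        by (rule adj_meas[where n=N]) (rule cmat_carrier | rule em | rule ij | assumption)+
      show "(\<lambda>f. Determinant.det (cmat N (Gz W L (Xl f) (Yl f) z))) \<in> borel_measurable (PiM (Kidx N) (\<lambda>_. borel))"
        by (rule det_meas[where n=N]) (rule cmat_carrier | rule em | assumption)+
    qed
  qed
  show ?thesis unfolding Phi_def
  proof (rule measurable_restrict)
    fix p assume "p \<in> {..<N} \<times> {..<N}"
    then obtain i j where p: "p = (i,j)" "i < N" "j < N" by auto
    show "(\<lambda>f. case p of (i, j) \<Rightarrow> resolvent N (gauss_mat W L 1 (Xl f) (Yl f)) z i j) \<in> measurable (PiM (Kidx N) (\<lambda>_. borel)) borel"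
      using ent[OF p(2,3)] unfolding p(1) by simp
  qed
qed

lemma law_Phi:
  assumes G: "std_gauss_family M N xi eta" and N: "0 < N" and z: "Im z \<noteq> 0"
  shows "mat_law M N (\<lambda>\<omega>. resolvent N (gauss_mat W L 1 (xi \<omega>) (eta \<omega>)) z) =
         distr (PiM (Kidx N) (\<lambda>_. density lborel std_normal_density)) (PiM ({..<N} \<times> {..<N}) (\<lambda>_. borel)) (Phi W L N z)"
proof -
  define fam where "fam = (\<lambda>k. case k of Inl (i, j) \<Rightarrow> (\<lambda>\<omega>. xi \<omega> i j) | Inr (i, j) \<Rightarrow> (\<lambda>\<omega>. eta \<omega> i j))"
  have ps: "prob_space M" using G unfolding std_gauss_family_def by simp
  have ind: "prob_space.indep_vars M (\<lambda>_. borel) fam (Kidx N)"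
    using G unfolding std_gauss_family_def fam_def Kidx_def by simp
  have dist: "\<And>i j. (i,j) \<in> upper_idx N \<Longrightarrow> distributed M lborel (\<lambda>\<omega>. xi \<omega> i j) std_normal_density \<and>
        distributed M lborel (\<lambda>\<omega>. eta \<omega> i j) std_normal_density"
    using G unfolding std_gauss_family_def by auto
  have dk: "distributed M lborel (fam k) std_normal_density" if "k \<in> Kidx N" for k
  proof -
    from that obtain i j where ij: "(i,j) \<in> upper_idx N" and k: "k = Inl (i,j) \<or> k = Inr (i,j)"
      unfolding Kidx_def by auto
    then show ?thesis using dist[OF ij] unfolding fam_def by auto
  qed
  have famd: "distr M borel (fam k) = density lborel std_normal_density" if "k \<in> Kidx N" for k
  proof -
    have "distr M borel (fam k) = distr M lborel (fam k)" by (rule distr_cong) simp_all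
    also have "\<dots> = density lborel std_normal_density" by (rule distributed_distr_eq_density[OF dk[OF that]])
    finally show ?thesis .
  qed
  have meas: "fam k \<in> measurable M borel" if "k \<in> Kidx N" for k
    using distributed_measurable[OF dk[OF that]] by simp
  have Kne: "Kidx N \<noteq> {}" using N unfolding Kidx_def upper_idx_def by auto
  have "distr M (PiM (Kidx N) (\<lambda>_. borel)) (\<lambda>\<omega>. \<lambda>k\<in>Kidx N. fam k \<omega>) = PiM (Kidx N) (\<lambda>k. distr M borel (fam k))"
    using prob_space.indep_vars_iff_distr_eq_PiM'[OF ps Kne meas] ind by simp
  also have "\<dots> = PiM (Kidx N) (\<lambda>_. density lborel std_normal_density)"
    by (rule PiM_cong) (simp_all add: famd)
  finally have D: "distr M (PiM (Kidx N) (\<lambda>_. borel)) (\<lambda>\<omega>. \<lambda>k\<in>Kidx N. fam k \<omega>) = PiM (Kidx N) (\<lambda>_. density lborel std_normal_density)" .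
  have fm: "(\<lambda>\<omega>. \<lambda>k\<in>Kidx N. fam k \<omega>) \<in> measurable M (PiM (Kidx N) (\<lambda>_. borel))"
    by (rule measurable_restrict) (rule meas)
  have pt: "(\<lambda>(i,j)\<in>{..<N} \<times> {..<N}. resolvent N (gauss_mat W L 1 (xi \<omega>) (eta \<omega>)) z i j) =
            Phi W L N z (\<lambda>k\<in>Kidx N. fam k \<omega>)" for \<omega>
  proof -
    define R where "R = (\<lambda>k\<in>Kidx N. fam k \<omega>)"
    have gc: "gauss_mat W L 1 (xi \<omega>) (eta \<omega>) i j = gauss_mat W L 1 (Xl R) (Yl R) i j" if "i < N" "j < N" for i j
      by (rule gauss_cong[OF _ that]) (auto simp: Xl_def Yl_def R_def Kidx_def upper_idx_def fam_def)
    have "resolvent N (gauss_mat W L 1 (xi \<omega>) (eta \<omega>)) z = resolvent N (gauss_mat W L 1 (Xl R) (Yl R)) z"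
      unfolding resolvent_def by (rule mat_inv_cong) (simp add: gc)
    then show ?thesis unfolding Phi_def R_def by simp
  qed
  have "mat_law M N (\<lambda>\<omega>. resolvent N (gauss_mat W L 1 (xi \<omega>) (eta \<omega>)) z) =
        distr M (PiM ({..<N} \<times> {..<N}) (\<lambda>_. borel)) (Phi W L N z \<circ> (\<lambda>\<omega>. \<lambda>k\<in>Kidx N. fam k \<omega>))"
    unfolding mat_law_def by (rule distr_cong) (simp_all add: pt)
  also have "\<dots> = distr (distr M (PiM (Kidx N) (\<lambda>_. borel)) (\<lambda>\<omega>. \<lambda>k\<in>Kidx N. fam k \<omega>)) (PiM ({..<N} \<times> {..<N}) (\<lambda>_. borel)) (Phi W L N z)"
    by (rule distr_distr[symmetric, OF Phi_meas[OF z] fm])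
  also have "\<dots> = distr (PiM (Kidx N) (\<lambda>_. density lborel std_normal_density)) (PiM ({..<N} \<times> {..<N}) (\<lambda>_. borel)) (Phi W L N z)"
    unfolding D ..
  finally show ?thesis .
qed

lemma resolvent_scaled:
  assumes z: "Im z \<noteq> 0" and r: "r > 0"
  shows "(\<lambda>i j. complex_of_real (sqrt (r\<^sup>2)) * resolvent N (gauss_mat W L (r\<^sup>2) X Y) (complex_of_real r * z) i j)
       = resolvent N (gauss_mat W L 1 X Y) z"
proof -
  have sr: "sqrt (r\<^sup>2) = r" using r by simp
  have "resolvent N (gauss_mat W L (r\<^sup>2) X Y) (complex_of_real r * z) = mat_inv N (\<lambda>i j. complex_of_real r * Gz W L X Y z i j)"
    unfolding resolvent_def Gz_def
    by (rule arg_cong[where f="mat_inv N"], intro ext) (use r in \<open>auto simp: gauss_scale[of "r\<^sup>2"] right_diff_distrib\<close>)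
  also have "\<dots> = (\<lambda>i j. mat_inv N (Gz W L X Y z) i j / complex_of_real r)"
    by (rule mat_inv_scale[OF Gz_ker[OF z]]) (use r in simp)
  finally have e: "resolvent N (gauss_mat W L (r\<^sup>2) X Y) (complex_of_real r * z) = (\<lambda>i j. mat_inv N (Gz W L X Y z) i j / complex_of_real r)" .
  show ?thesis unfolding e sr resolvent_Gz using r by (intro ext) simp
qed

lemma matrix_clause:
  assumes z: "Im z \<noteq> 0" and r: "r > 0"
  shows "\<forall>(W::nat) (L::nat) (M::'a measure) xi eta (M'::'b measure) xi' eta'.
           0 < W \<longrightarrow> 0 < L \<longrightarrow>
           std_gauss_family M (W * L) xi eta \<longrightarrow> std_gauss_family M' (W * L) xi' eta' \<longrightarrow>
           mat_law M (W * L) (\<lambda>\<omega>. resolvent (W * L) (gauss_mat W L 1 (xi \<omega>) (eta \<omega>)) z) =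
           mat_law M' (W * L) (\<lambda>\<omega>. \<lambda>i j. complex_of_real (sqrt (r\<^sup>2)) *
              resolvent (W * L) (gauss_mat W L (r\<^sup>2) (xi' \<omega>) (eta' \<omega>)) (complex_of_real r * z) i j)"
proof (intro allI impI)
  fix W L :: nat and M :: "'a measure" and xi eta and M' :: "'b measure" and xi' eta'
  assume W: "0 < W" and L: "0 < L" and G: "std_gauss_family M (W * L) xi eta" and G': "std_gauss_family M' (W * L) xi' eta'"
  have N: "0 < W * L" using W L by simp
  show "mat_law M (W * L) (\<lambda>\<omega>. resolvent (W * L) (gauss_mat W L 1 (xi \<omega>) (eta \<omega>)) z) =
           mat_law M' (W * L) (\<lambda>\<omega>. \<lambda>i j. complex_of_real (sqrt (r\<^sup>2)) *
              resolvent (W * L) (gauss_mat W L (r\<^sup>2) (xi' \<omega>) (eta' \<omega>)) (complex_of_real r * z) i j)"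
    unfolding resolvent_scaled[OF z r] law_Phi[OF G N z] law_Phi[OF G' N z] ..
qed


theorem lemma2p1:
  fixes \<kappa> :: real
  assumes "\<kappa> > 0"
  shows "\<exists>c>0. \<forall>z::complex. 0 < Im z \<and> Im z \<le> 1 \<and> \<bar>Re z\<bar> \<le> 2 - \<kappa> \<longrightarrow>
     (\<exists>E t. \<bar>E\<bar> \<le> 2 - \<kappa> \<and> 0 \<le> t \<and> t < 1 \<and>
        z = complex_of_real (1 / sqrt t) * z_flow E t \<and>
        c \<le> t \<and> c * Im z \<le> Im (z_flow E t) \<and> Im (z_flow E t) \<le> Im z / c \<and>
        m_sc z = complex_of_real (sqrt t) * m_bd E \<and>
        (\<forall>(W::nat) (L::nat) (M::'a measure) xi eta (M'::'b measure) xi' eta'.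
           0 < W \<longrightarrow> 0 < L \<longrightarrow>
           std_gauss_family M (W * L) xi eta \<longrightarrow> std_gauss_family M' (W * L) xi' eta' \<longrightarrow>
           mat_law M (W * L) (\<lambda>\<omega>. resolvent (W * L) (gauss_mat W L 1 (xi \<omega>) (eta \<omega>)) z) =
           mat_law M' (W * L) (\<lambda>\<omega>. \<lambda>i j. complex_of_real (sqrt t) *
              resolvent (W * L) (gauss_mat W L t (xi' \<omega>) (eta' \<omega>)) (z_flow E t) i j)))"
proof (rule exI[of _ "1/16"], intro conjI allI impI)
  show "(1/16::real) > 0" by simp
next
  fix z :: complex
  assume h: "0 < Im z \<and> Im z \<le> 1 \<and> \<bar>Re z\<bar> \<le> 2 - \<kappa>"
  then have h1: "0 < Im z" and h2: "Im z \<le> 1" and h3: "\<bar>Re z\<bar> \<le> 2 - \<kappa>" by auto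
  obtain r E where R: "r > 0" "\<bar>E\<bar> \<le> 2 - \<kappa>" "0 \<le> r\<^sup>2" "r\<^sup>2 < 1"
     "z = complex_of_real (1 / sqrt (r\<^sup>2)) * z_flow E (r\<^sup>2)"
     "1/16 \<le> r\<^sup>2" "1/16 * Im z \<le> Im (z_flow E (r\<^sup>2))" "Im (z_flow E (r\<^sup>2)) \<le> Im z / (1/16)"
     "m_sc z = complex_of_real (sqrt (r\<^sup>2)) * m_bd E" and zf: "z_flow E (r\<^sup>2) = complex_of_real r * z"
    using analytic_part[OF assms h1 h2 h3] by blast
  have zne: "Im z \<noteq> 0" using h1 by simp
  note mc = matrix_clause[OF zne R(1), folded zf]
  show "\<exists>E t. \<bar>E\<bar> \<le> 2 - \<kappa> \<and> 0 \<le> t \<and> t < 1 \<and>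
        z = complex_of_real (1 / sqrt t) * z_flow E t \<and>
        1/16 \<le> t \<and> 1/16 * Im z \<le> Im (z_flow E t) \<and> Im (z_flow E t) \<le> Im z / (1/16) \<and>
        m_sc z = complex_of_real (sqrt t) * m_bd E \<and>
        (\<forall>(W::nat) (L::nat) (M::'a measure) xi eta (M'::'b measure) xi' eta'.
           0 < W \<longrightarrow> 0 < L \<longrightarrow>
           std_gauss_family M (W * L) xi eta \<longrightarrow> std_gauss_family M' (W * L) xi' eta' \<longrightarrow>
           mat_law M (W * L) (\<lambda>\<omega>. resolvent (W * L) (gauss_mat W L 1 (xi \<omega>) (eta \<omega>)) z) =
           mat_law M' (W * L) (\<lambda>\<omega>. \<lambda>i j. complex_of_real (sqrt t) *
              resolvent (W * L) (gauss_mat W L t (xi' \<omega>) (eta' \<omega>)) (z_flow E t) i j))"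
    by (intro exI[of _ E] exI[of _ "r\<^sup>2"] conjI) (rule R mc)+
qed

end
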